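(* Let $v$ be the vertex of $\mathcal H^\dagger$ with coordinates $(m,n)\in\mathbb Z^2$, and let $T'$ be the image of $\mathcal H^\dagger$ under the map $\psi'$ constructed exactly as $\psi_{\lambda\Delta}$ (same flow $\phi^\dagger$), except that the additive constant is fixed by $\psi'(v)=0$ instead of $\psi=0$ at the dual vertex just to the left of $\mathcal H_1$. Then $T'=T_{\lambda'\Delta}$ with $$\lambda'=\lambda\Big(\tfrac{\beta}{\gamma}\Big)^{m}\Big(\tfrac{\beta}{\alpha}\Big)^{n}.$$ In particular, if $\lambda$ is chosen uniformly at random on the unit circle, the law of the random T-graph $T_{\lambda\Delta}$ is invariant under the lattice translations of $\mathcal H$ (i.e. under re-centring the construction at any dual vertex).
   Context: Setup. Let $\mathcal H$ be the hexagonal lattice embedded in the plane with one third of its edges vertical, with its vertices properly 2-coloured black/white. Let $e_1,e_2$ be two vectors generating its translation group and $\mathcal H_1$ a fundamental domain consisting of one vertical edge with its white top endpoint and black bottom endpoint. Each vertex $v$ has coordinates $(m(v),n(v))\in\mathbb Z^2$, the unique pair with $v-m e_1-n e_2\in\mathcal H_1$; thus $w(m,n)$ (white) and $b(m,n)$ (black) are the two endpoints of a vertical edge. $\mathcal H^\dagger$ denotes the dual triangular lattice; a face of $\mathcal H^\dagger$ is black or white according to the vertex of $\mathcal H$ it contains; a vertex $v$ of $\mathcal H^\dagger$ (a hexagonal face of $\mathcal H$) has coordinates $(m(v),n(v))$ equal to the common coordinates of the two vertices of that hexagon located just to the right of $v$. Fix $p_a,p_b,p_c\in(0,1)$ with $p_a+p_b+p_c=1$,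 a triangle $\Delta$ in $\mathbb C$ with vertices $A,B,C$ and angles $\pi p_a,\pi p_b,\pi p_c$, and set $\alpha=C-B$, $\beta=A-C$, $\gamma=B-A$ (so $\alpha+\beta+\gamma=0$). For $\lambda\in\mathbb C$ with $|\lambda|=1$ define, for adjacent white $w$ and black $b$, $$\phi(wb)=\Re\Big(\lambda^{-1}(\tfrac{\beta}{\gamma})^{-m(w)}(\tfrac{\beta}{\alpha})^{-n(w)}\Big)\,\alpha\,\lambda\,(\tfrac{\beta}{\gamma})^{m(b)}(\tfrac{\beta}{\alpha})^{n(b)},\qquad \phi(bw)=-\phi(wb).$$ The dual flow $\phi^\dagger$ assigns to the oriented edge of $\mathcal H^\dagger$ crossing $wb$ with $w$ on its left the value $\phi(wb)$; it has zero circulation around every triangle, so there is a function $\psi=\psi_{\lambda\Delta}$ on vertices of $\mathcal H^\dagger$ with $\psi(v')-\psi(v)=\phi^\dagger(vv')$, normalised by $\psi=0$ at the dual vertex just to the left of $\mathcal H_1$. Extending $\psi$ affinely on edges, $T_{\lambda\Delta}=\psi(\mathcal H^\dagger)\subset\mathbb C$ is called the T-graph with parameters $\Delta,\lambda$. *)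

theory Defs
  imports "HOL-Analysis.Analysis" "HOL-Probability.Probability"
begin

text \<open>Coordinates: white vertex w(m,n) and black vertex b(m,n) are the endpoints of the
vertical edge (m,n).  White w(m,n) is adjacent to b(m,n), b(m,n+1), b(m-1,n+1)
(this adjacency is forced by the requirement that the flow phi be divergence free,
using alpha+beta+gamma = 0).  Dual vertices (faces of H) are indexed by int pairs;
face (m,n) is the hexagon just to the left of the vertical edge (m,n).\<close>

definition tri_alpha :: "complex \<Rightarrow> complex \<Rightarrow> complex \<Rightarrow> complex" where
  "tri_alpha A B C = C - B"
definition tri_beta :: "complex \<Rightarrow> complex \<Rightarrow> complex \<Rightarrow> complex" where
  "tri_beta A B C = A - C"
definition tri_gamma :: "complex \<Rightarrow> complex \<Rightarrow> complex \<Rightarrow> complex" where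
  "tri_gamma A B C = B - A"

definition tri_angle :: "complex \<Rightarrow> complex \<Rightarrow> complex \<Rightarrow> real" where
  "tri_angle A B C = \<bar>Arg ((B - A) / (C - A))\<bar>"

text \<open>The flow phi(wb) for white w with coordinates (mw,nw) and black b with (mb,nb).\<close>
definition tflow :: "complex \<Rightarrow> complex \<Rightarrow> complex \<Rightarrow> complex \<Rightarrow> int \<times> int \<Rightarrow> int \<times> int \<Rightarrow> complex" where
  "tflow A B C lam w b =
     (let al = tri_alpha A B C; be = tri_beta A B C; ga = tri_gamma A B C;
          x = be / ga; y = be / al
      in complex_of_real (Re (inverse lam * x powi (- fst w) * y powi (- snd w)))
         * al * lam * x powi (fst b) * y powi (snd b))"

text \<open>psi is a height function of the dual flow normalised to vanish at dual vertex p.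
For each white vertex w(m,n) the three dual edges crossing its three edges (oriented with
w on the left) form the triangle (m,n) -> (m+1,n) -> (m,n+1) -> (m,n).  Every edge of H
has exactly one white endpoint, so these constraints cover every dual edge.\<close>
definition is_height :: "complex \<Rightarrow> complex \<Rightarrow> complex \<Rightarrow> complex \<Rightarrow> int \<times> int \<Rightarrow> (int \<times> int \<Rightarrow> complex) \<Rightarrow> bool" where
  "is_height A B C lam p psi \<longleftrightarrow> psi p = 0 \<and>
     (\<forall>m n. psi (m+1, n) - psi (m, n) = tflow A B C lam (m, n) (m, n)
          \<and> psi (m, n+1) - psi (m+1, n) = tflow A B C lam (m, n) (m, n+1)
          \<and> psi (m, n) - psi (m, n+1) = tflow A B C lam (m, n) (m-1, n+1))"

definition tpsi :: "complex \<Rightarrow> complex \<Rightarrow> complex \<Rightarrow> complex \<Rightarrow> int \<times> int \<Rightarrow> int \<times> int \<Rightarrow> complex" where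
  "tpsi A B C lam p = (THE psi. is_height A B C lam p psi)"

definition dual_edges :: "((int \<times> int) \<times> (int \<times> int)) set" where
  "dual_edges = (\<Union>m n. {((m,n),(m+1,n)), ((m+1,n),(m,n+1)), ((m,n+1),(m,n))})"

definition tgraph_img :: "(int \<times> int \<Rightarrow> complex) \<Rightarrow> complex set" where
  "tgraph_img psi = (\<Union>e\<in>dual_edges. closed_segment (psi (fst e)) (psi (snd e)))"

text \<open>The T-graph T_{lambda Delta}: normalised at the dual vertex (0,0) just left of H_1.\<close>
definition Tgraph :: "complex \<Rightarrow> complex \<Rightarrow> complex \<Rightarrow> complex \<Rightarrow> complex set" where
  "Tgraph A B C lam = tgraph_img (tpsi A B C lam (0,0))"

definition unif_circle :: "complex measure" where
  "unif_circle = distr (uniform_measure lborel {0..<2*pi}) borel cis"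

end

theory Submission
  imports Defs
begin


lemma tflow_shift:
  fixes A B C lam :: complex and m n a b a' b' :: int
  assumes nz: "tri_alpha A B C \<noteq> 0" "tri_beta A B C \<noteq> 0" "tri_gamma A B C \<noteq> 0"
  shows "tflow A B C (lam * (tri_beta A B C / tri_gamma A B C) powi m
                               * (tri_beta A B C / tri_alpha A B C) powi n) (a,b) (a',b')
       = tflow A B C lam (a+m, b+n) (a'+m, b'+n)"
proof -
  define X where "X = tri_beta A B C / tri_gamma A B C"
  define Y where "Y = tri_beta A B C / tri_alpha A B C"
  have X: "X \<noteq> 0" and Y: "Y \<noteq> 0" using nz by (auto simp: X_def Y_def)
  have e1: "X powi (-(a+m)) = X powi (-a) * inverse (X powi m)"
    using X by (simp add: power_int_add power_int_minus[symmetric] algebra_simps flip: power_int_add)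
  have e2: "Y powi (-(b+n)) = Y powi (-b) * inverse (Y powi n)"
    using Y by (simp add: power_int_add power_int_minus[symmetric] algebra_simps flip: power_int_add)
  have e3: "X powi (a'+m) = X powi a' * X powi m" using X by (simp add: power_int_add)
  have e4: "Y powi (b'+n) = Y powi b' * Y powi n" using Y by (simp add: power_int_add)
  have h1: "inverse (lam * X powi m * Y powi n) * X powi (-a) * Y powi (-b)
        = inverse lam * X powi (-(a+m)) * Y powi (-(b+n))"
    unfolding e1 e2 by (simp only: inverse_mult_distrib mult_ac)
  have h2: "r * al * (lam * X powi m * Y powi n) * X powi a' * Y powi b' = r * al * lam * X powi (a'+m) * Y powi (b'+n)" for r al
    unfolding e3 e4 by (simp only: mult_ac)
  show ?thesis
    unfolding tflow_def Let_def X_def[symmetric] Y_def[symmetric] fst_conv snd_conv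
    by (simp only: h1 h2)
qed

lemma const2:
  fixes f :: "int \<times> int \<Rightarrow> 'a"
  assumes "\<And>a b. f (a+1,b) = f (a,b)" "\<And>a b. f (a,b+1) = f (a,b)"
  shows "f (a,b) = f (0,0)"
proof -
  have h: "f (a,b) = f (0,b)" for a b
    apply (induction a rule: int_induct[where k=0])
    apply simp
    apply (metis assms(1))
    by (metis assms(1) diff_add_cancel)
  have v: "f (0,b) = f (0,0)" for b
    apply (induction b rule: int_induct[where k=0])
    apply simp
    apply (metis assms(2))
    by (metis assms(2) diff_add_cancel)
  show ?thesis using h[of a b] v[of b] by simp
qed
lemma height_unique:
  assumes "is_height A B C lam p psi1" "is_height A B C lam p psi2"
  shows "psi1 = psi2"
proof -
  define d where "d q = psi1 q - psi2 q" for q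
  have d1: "d (a+1,b) = d (a,b)" for a b
  proof -
    have "psi1 (a+1,b) - psi1 (a,b) = psi2 (a+1,b) - psi2 (a,b)"
      using assms unfolding is_height_def by simp
    then show ?thesis unfolding d_def by (simp add: algebra_simps)
  qed
  have d2: "d (a,b+1) = d (a,b)" for a b
  proof -
    have "psi1 (a,b) - psi1 (a,b+1) = psi2 (a,b) - psi2 (a,b+1)"
      using assms unfolding is_height_def by simp
    then show ?thesis unfolding d_def by (simp add: algebra_simps)
  qed
  have "d q = 0" for q
  proof -
    obtain a b where q: "q = (a,b)" by force
    obtain a' b' where p: "p = (a',b')" by force
    have "d q = d (0,0)" unfolding q by (rule const2[OF d1 d2])
    also have "\<dots> = d p" unfolding p by (rule const2[OF d1 d2, symmetric])
    also have "\<dots> = 0" using assms unfolding is_height_def d_def by simp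
    finally show ?thesis .
  qed
  then show ?thesis unfolding d_def by (simp add: fun_eq_iff)
qed

lemma seg_sub: "e \<in> dual_edges \<Longrightarrow> closed_segment (psi (fst e)) (psi (snd e)) \<subseteq> tgraph_img psi"
  unfolding tgraph_img_def by blast

lemma de1: "((a,b),(a+1,b)) \<in> dual_edges" unfolding dual_edges_def by blast
lemma de2: "((a+1,b),(a,b+1)) \<in> dual_edges" unfolding dual_edges_def by blast
lemma de3: "((a,b+1),(a,b)) \<in> dual_edges" unfolding dual_edges_def by blast

lemma tgraph_img_shift:
  "tgraph_img (\<lambda>(a,b). psi (a+m, b+n)) = tgraph_img psi"
proof -
  have "closed_segment (psi (fst e)) (psi (snd e)) \<subseteq> tgraph_img (\<lambda>(a,b). psi (a+m, b+n))"
    if "e \<in> dual_edges" for e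
  proof -
    from that obtain a b where "e = ((a,b),(a+1,b)) \<or> e = ((a+1,b),(a,b+1)) \<or> e = ((a,b+1),(a,b))"
      unfolding dual_edges_def by blast
    then show ?thesis
    proof (elim disjE)
      assume e: "e = ((a,b),(a+1,b))"
      show ?thesis using seg_sub[OF de1[of "a-m" "b-n"], of "\<lambda>(a,b). psi (a+m, b+n)"] unfolding e
        by (simp add: algebra_simps)
    next
      assume e: "e = ((a+1,b),(a,b+1))"
      show ?thesis using seg_sub[OF de2[of "a-m" "b-n"], of "\<lambda>(a,b). psi (a+m, b+n)"] unfolding e
        by (simp add: algebra_simps)
    next
      assume e: "e = ((a,b+1),(a,b))"
      show ?thesis using seg_sub[OF de3[of "a-m" "b-n"], of "\<lambda>(a,b). psi (a+m, b+n)"] unfolding e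
        by (simp add: algebra_simps)
    qed
  qed
  moreover have "closed_segment ((\<lambda>(a,b). psi (a+m, b+n)) (fst e)) ((\<lambda>(a,b). psi (a+m, b+n)) (snd e)) \<subseteq> tgraph_img psi"
    if "e \<in> dual_edges" for e
  proof -
    from that obtain a b where "e = ((a,b),(a+1,b)) \<or> e = ((a+1,b),(a,b+1)) \<or> e = ((a,b+1),(a,b))"
      unfolding dual_edges_def by blast
    then show ?thesis
    proof (elim disjE)
      assume e: "e = ((a,b),(a+1,b))"
      show ?thesis using seg_sub[OF de1[of "a+m" "b+n"], of psi] unfolding e
        by (simp add: algebra_simps)
    next
      assume e: "e = ((a+1,b),(a,b+1))"
      show ?thesis using seg_sub[OF de2[of "a+m" "b+n"], of psi] unfolding e
        by (simp add: algebra_simps)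
    next
      assume e: "e = ((a,b+1),(a,b))"
      show ?thesis using seg_sub[OF de3[of "a+m" "b+n"], of psi] unfolding e
        by (simp add: algebra_simps)
    qed
  qed
  ultimately show ?thesis unfolding tgraph_img_def[of psi] tgraph_img_def[of "\<lambda>(a,b). psi (a+m, b+n)"]
    by blast
qed


lemma height_fwd:
  assumes nz: "tri_alpha A B C \<noteq> 0" "tri_beta A B C \<noteq> 0" "tri_gamma A B C \<noteq> 0"
    and h: "is_height A B C lam (m,n) psi"
  shows "is_height A B C (lam * (tri_beta A B C / tri_gamma A B C) powi m
                               * (tri_beta A B C / tri_alpha A B C) powi n) (0,0) (\<lambda>(a,b). psi (a+m, b+n))"
  unfolding is_height_def
proof (intro conjI allI)
  show "(\<lambda>(a,b). psi (a+m, b+n)) (0,0) = 0" using h by (simp add: is_height_def)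
  fix a b :: int
  have H: "psi (a+m+1, b+n) - psi (a+m, b+n) = tflow A B C lam (a+m, b+n) (a+m, b+n)
          \<and> psi (a+m, b+n+1) - psi (a+m+1, b+n) = tflow A B C lam (a+m, b+n) (a+m, b+n+1)
          \<and> psi (a+m, b+n) - psi (a+m, b+n+1) = tflow A B C lam (a+m, b+n) (a+m-1, b+n+1)"
    using h unfolding is_height_def by (simp only:)
  note S = tflow_shift[OF nz, of lam m n]
  show "(\<lambda>(a,b). psi (a+m, b+n)) (a+1, b) - (\<lambda>(a,b). psi (a+m, b+n)) (a, b) = tflow A B C (lam * (tri_beta A B C / tri_gamma A B C) powi m
                               * (tri_beta A B C / tri_alpha A B C) powi n) (a, b) (a, b)"
    unfolding S[of a b a b] prod.case using H by (simp only: diff_conv_add_uminus ac_simps)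
  show "(\<lambda>(a,b). psi (a+m, b+n)) (a, b+1) - (\<lambda>(a,b). psi (a+m, b+n)) (a+1, b) = tflow A B C (lam * (tri_beta A B C / tri_gamma A B C) powi m
                               * (tri_beta A B C / tri_alpha A B C) powi n) (a, b) (a, b+1)"
    unfolding S[of a b a "b+1"] prod.case using H by (simp only: diff_conv_add_uminus ac_simps)
  show "(\<lambda>(a,b). psi (a+m, b+n)) (a, b) - (\<lambda>(a,b). psi (a+m, b+n)) (a, b+1) = tflow A B C (lam * (tri_beta A B C / tri_gamma A B C) powi m
                               * (tri_beta A B C / tri_alpha A B C) powi n) (a, b) (a-1, b+1)"
    unfolding S[of a b "a-1" "b+1"] prod.case using H by (simp only: diff_conv_add_uminus ac_simps)
qed

lemma height_bwd:
  assumes nz: "tri_alpha A B C \<noteq> 0" "tri_beta A B C \<noteq> 0" "tri_gamma A B C \<noteq> 0"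
    and h: "is_height A B C (lam * (tri_beta A B C / tri_gamma A B C) powi m
                               * (tri_beta A B C / tri_alpha A B C) powi n) (0,0) phi"
  shows "is_height A B C lam (m,n) (\<lambda>(a,b). phi (a-m, b-n))"
  unfolding is_height_def
proof (intro conjI allI)
  show "(\<lambda>(a,b). phi (a-m, b-n)) (m,n) = 0" using h by (simp add: is_height_def)
  fix a b :: int
  have H: "phi (a-m+1, b-n) - phi (a-m, b-n) = tflow A B C (lam * (tri_beta A B C / tri_gamma A B C) powi m
                               * (tri_beta A B C / tri_alpha A B C) powi n) (a-m, b-n) (a-m, b-n)
          \<and> phi (a-m, b-n+1) - phi (a-m+1, b-n) = tflow A B C (lam * (tri_beta A B C / tri_gamma A B C) powi m
                               * (tri_beta A B C / tri_alpha A B C) powi n) (a-m, b-n) (a-m, b-n+1)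
          \<and> phi (a-m, b-n) - phi (a-m, b-n+1) = tflow A B C (lam * (tri_beta A B C / tri_gamma A B C) powi m
                               * (tri_beta A B C / tri_alpha A B C) powi n) (a-m, b-n) (a-m-1, b-n+1)"
    using h unfolding is_height_def by (simp only:)
  note S = tflow_shift[OF nz, of lam m n]
  have S1: "tflow A B C (lam * (tri_beta A B C / tri_gamma A B C) powi m * (tri_beta A B C / tri_alpha A B C) powi n) (a-m, b-n) (a-m, b-n) = tflow A B C lam (a, b) (a, b)"
    by (rule trans[OF S[of "a-m" "b-n" "a-m" "b-n"]]) simp
  have S2: "tflow A B C (lam * (tri_beta A B C / tri_gamma A B C) powi m * (tri_beta A B C / tri_alpha A B C) powi n) (a-m, b-n) (a-m, b-n+1) = tflow A B C lam (a, b) (a, b+1)"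
    by (rule trans[OF S[of "a-m" "b-n" "a-m" "b-n+1"]]) simp
  have S3: "tflow A B C (lam * (tri_beta A B C / tri_gamma A B C) powi m * (tri_beta A B C / tri_alpha A B C) powi n) (a-m, b-n) (a-m-1, b-n+1) = tflow A B C lam (a, b) (a-1, b+1)"
    by (rule trans[OF S[of "a-m" "b-n" "a-m-1" "b-n+1"]]) simp
  show "(\<lambda>(a,b). phi (a-m, b-n)) (a+1, b) - (\<lambda>(a,b). phi (a-m, b-n)) (a, b) = tflow A B C lam (a, b) (a, b)"
    using H unfolding S1 prod.case by (simp only: diff_conv_add_uminus ac_simps)
  show "(\<lambda>(a,b). phi (a-m, b-n)) (a, b+1) - (\<lambda>(a,b). phi (a-m, b-n)) (a+1, b) = tflow A B C lam (a, b) (a, b+1)"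
    using H unfolding S2 prod.case by (simp only: diff_conv_add_uminus ac_simps)
  show "(\<lambda>(a,b). phi (a-m, b-n)) (a, b) - (\<lambda>(a,b). phi (a-m, b-n)) (a, b+1) = tflow A B C lam (a, b) (a-1, b+1)"
    using H unfolding S3 prod.case by (simp only: diff_conv_add_uminus ac_simps)
qed

lemma img_shift_main:
  assumes nz: "tri_alpha A B C \<noteq> 0" "tri_beta A B C \<noteq> 0" "tri_gamma A B C \<noteq> 0"
  shows "tgraph_img (tpsi A B C lam (m, n))
           = Tgraph A B C (lam * (tri_beta A B C / tri_gamma A B C) powi m
                               * (tri_beta A B C / tri_alpha A B C) powi n)"
proof (cases "\<exists>psi. is_height A B C lam (m,n) psi")
  case True
  then obtain psi where p: "is_height A B C lam (m,n) psi" by blast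
  have t: "tpsi A B C lam (m,n) = psi" unfolding tpsi_def
    using p height_unique by blast
  have t2: "tpsi A B C (lam * (tri_beta A B C / tri_gamma A B C) powi m
                               * (tri_beta A B C / tri_alpha A B C) powi n) (0,0) = (\<lambda>(a,b). psi (a+m, b+n))"
    unfolding tpsi_def using height_fwd[OF nz p] height_unique by blast
  show ?thesis unfolding Tgraph_def t t2 tgraph_img_shift ..
next
  case False
  have "\<not> is_height A B C (lam * (tri_beta A B C / tri_gamma A B C) powi m
                               * (tri_beta A B C / tri_alpha A B C) powi n) (0,0) phi" for phi
    using False height_bwd[OF nz] by blast
  then have "is_height A B C (lam * (tri_beta A B C / tri_gamma A B C) powi m
                               * (tri_beta A B C / tri_alpha A B C) powi n) (0,0) = is_height A B C lam (m,n)"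
    using False by (auto simp: fun_eq_iff)
  then show ?thesis unfolding Tgraph_def tpsi_def by simp
qed



lemma lborel_transl: "S \<in> sets borel \<Longrightarrow> emeasure lborel ((\<lambda>t. c + t) -` S) = emeasure lborel (S::real set)"
proof -
  assume S: "S \<in> sets borel"
  have "emeasure (distr lborel borel ((+) c)) S = emeasure lborel ((+) c -` S \<inter> space lborel)"
    using S by (intro emeasure_distr) auto
  then show ?thesis by (simp add: lborel_distr_plus)
qed

lemma periodic_measure:
  fixes E :: "real set"
  assumes E: "E \<in> sets borel" and per: "\<And>t. t + 2*pi \<in> E \<longleftrightarrow> t \<in> E"
    and th: "0 \<le> th" "th < 2*pi"
  shows "emeasure lborel ({0..<2*pi} \<inter> ((\<lambda>t. th + t) -` E)) = emeasure lborel ({0..<2*pi} \<inter> E)"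
proof -
  have eq: "{0..<2*pi} \<inter> ((\<lambda>t. th + t) -` E) = (\<lambda>t. th + t) -` ({th..<th+2*pi} \<inter> E)" by auto
  have S: "{th..<th+2*pi} \<inter> E \<in> sets borel" using E by auto
  have "emeasure lborel ({0..<2*pi} \<inter> ((\<lambda>t. th + t) -` E)) = emeasure lborel ({th..<th+2*pi} \<inter> E)"
    unfolding eq by (rule lborel_transl[OF S])
  also have "{th..<th+2*pi} \<inter> E = ({th..<2*pi} \<inter> E) \<union> ({2*pi..<2*pi+th} \<inter> E)" using th by auto
  also have "emeasure lborel \<dots> = emeasure lborel ({th..<2*pi} \<inter> E) + emeasure lborel ({2*pi..<2*pi+th} \<inter> E)"
    using E by (intro plus_emeasure[symmetric]) auto
  also have "{2*pi..<2*pi+th} \<inter> E = (\<lambda>t. (-2*pi) + t) -` ({0..<th} \<inter> E)"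
    using per[of "t - 2*pi" for t] by (auto simp: algebra_simps)
  also have "emeasure lborel \<dots> = emeasure lborel ({0..<th} \<inter> E)" by (rule lborel_transl) (use E in auto)
  also have "emeasure lborel ({th..<2*pi} \<inter> E) + emeasure lborel ({0..<th} \<inter> E)
      = emeasure lborel (({th..<2*pi} \<inter> E) \<union> ({0..<th} \<inter> E))"
    using E by (intro plus_emeasure) auto
  also have "({th..<2*pi} \<inter> E) \<union> ({0..<th} \<inter> E) = {0..<2*pi} \<inter> E" using th by auto
  finally show ?thesis .
qed

lemma sets_unif: "sets unif_circle = sets borel"
  by (simp add: unif_circle_def)
lemma cis_meas: "cis \<in> borel_measurable borel"
  by (rule borel_measurable_continuous_onI) (intro continuous_intros)
lemma rot_meas: "(\<lambda>l. l * cis th) \<in> unif_circle \<rightarrow>\<^sub>M unif_circle"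
proof -
  have eq: "unif_circle \<rightarrow>\<^sub>M unif_circle = borel \<rightarrow>\<^sub>M (borel :: complex measure)"
    by (rule measurable_cong_sets[OF sets_unif sets_unif])
  show ?thesis unfolding eq
    by (rule borel_measurable_continuous_onI) (intro continuous_intros)
qed
lemma space_unif: "space unif_circle = UNIV"
  by (simp add: unif_circle_def)

lemma rot_inv: assumes th: "0 \<le> th" "th < 2*pi"
  shows "distr unif_circle unif_circle (\<lambda>l. l * cis th) = unif_circle"
proof (rule measure_eqI)
  show "sets (distr unif_circle unif_circle (\<lambda>l. l * cis th)) = sets unif_circle" by simp
  fix A assume "A \<in> sets (distr unif_circle unif_circle (\<lambda>l. l * cis th))"
  then have A: "A \<in> sets borel" using sets_unif by simp
  define U where "U = uniform_measure lborel {0..<2*pi}"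
  have sU: "sets U = sets borel" unfolding U_def by simp
  have spU: "space U = UNIV" unfolding U_def by simp
  have ucirc: "unif_circle = distr U borel cis" unfolding unif_circle_def U_def ..
  have eqU: "U \<rightarrow>\<^sub>M (borel::complex measure) = borel \<rightarrow>\<^sub>M borel"
    by (rule measurable_cong_sets[OF sU refl])
  have cisU: "cis \<in> U \<rightarrow>\<^sub>M borel" unfolding eqU by (rule cis_meas)
  define E where "E = cis -` A"
  have E: "E \<in> sets borel" unfolding E_def using measurable_sets[OF cis_meas A] by simp
  have fm: "(\<lambda>t::real. th + t) \<in> borel_measurable borel" by simp
  have E': "(\<lambda>t. th + t) -` E \<in> sets borel" using measurable_sets[OF fm E] by simp
  have rA: "(\<lambda>l. l * cis th) -` A \<in> sets borel"
    using measurable_sets[OF rot_meas, of A] A sets_unif space_unif by simp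
  have per: "t + 2*pi \<in> E \<longleftrightarrow> t \<in> E" for t
    unfolding E_def by (simp add: cis_mult[symmetric])
  have "emeasure (distr unif_circle unif_circle (\<lambda>l. l * cis th)) A
        = emeasure unif_circle ((\<lambda>l. l * cis th) -` A \<inter> space unif_circle)"
    by (rule emeasure_distr[OF rot_meas]) (simp add: sets_unif A)
  also have "\<dots> = emeasure unif_circle ((\<lambda>l. l * cis th) -` A)" by (simp add: space_unif)
  also have "\<dots> = emeasure U (cis -` ((\<lambda>l. l * cis th) -` A) \<inter> space U)"
    unfolding ucirc by (rule emeasure_distr[OF cisU rA])
  also have "cis -` ((\<lambda>l. l * cis th) -` A) \<inter> space U = (\<lambda>t. th + t) -` E"
    unfolding E_def spU by (auto simp: cis_mult add.commute)
  also have "emeasure U \<dots> = emeasure lborel ({0..<2*pi} \<inter> ((\<lambda>t. th + t) -` E)) / emeasure lborel {0..<2*pi::real}"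
    unfolding U_def by (rule emeasure_uniform_measure) (use E' in auto)
  also have "\<dots> = emeasure lborel ({0..<2*pi} \<inter> E) / emeasure lborel {0..<2*pi::real}"
    using periodic_measure[OF E per th] by simp
  also have "\<dots> = emeasure U E" unfolding U_def by (rule emeasure_uniform_measure[symmetric]) (use E in auto)
  also have "\<dots> = emeasure U (cis -` A \<inter> space U)" unfolding E_def spU by simp
  also have "\<dots> = emeasure unif_circle A"
    unfolding ucirc by (rule emeasure_distr[OF cisU A, symmetric])
  finally show "emeasure (distr unif_circle unif_circle (\<lambda>l. l * cis th)) A = emeasure unif_circle A" .
qed



lemma tflow_scale: "r > 0 \<Longrightarrow> tflow A B C (lam * complex_of_real r) w b = tflow A B C lam w b"
proof -
  assume r: "r > 0"
  have e: "inverse (lam * complex_of_real r) * x * y = (inverse lam * x * y) / complex_of_real r" for x y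
    by (simp add: inverse_mult_distrib divide_complex_def mult_ac)
  have h: "complex_of_real (Re (inverse (lam * complex_of_real r) * x * y)) * al * (lam * complex_of_real r)
         = complex_of_real (Re (inverse lam * x * y)) * al * lam" for x y al
  proof -
    have "complex_of_real (Re (inverse (lam * complex_of_real r) * x * y))
        = complex_of_real (Re (inverse lam * x * y)) / complex_of_real r"
      unfolding e Re_divide_of_real by (simp add: of_real_divide)
    then show ?thesis using r by (simp add: field_simps)
  qed
  show ?thesis unfolding tflow_def Let_def h ..
qed

lemma Tgraph_scale: "r > 0 \<Longrightarrow> Tgraph A B C (lam * complex_of_real r) = Tgraph A B C lam"
  unfolding Tgraph_def tpsi_def is_height_def by (simp add: tflow_scale)



theorem mainTheorem1:
  fixes pa pb pc :: real and A B C lam :: complex and m n :: int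
  assumes "0 < pa" "pa < 1" "0 < pb" "pb < 1" "0 < pc" "pc < 1" "pa + pb + pc = 1"
    and "tri_angle A B C = pi * pa" "tri_angle B C A = pi * pb" "tri_angle C A B = pi * pc"
    and "cmod lam = 1"
  shows "tgraph_img (tpsi A B C lam (m, n))
           = Tgraph A B C (lam * (tri_beta A B C / tri_gamma A B C) powi m
                               * (tri_beta A B C / tri_alpha A B C) powi n)
     \<and> (\<forall>N :: complex set measure.
          (\<lambda>l. Tgraph A B C l) \<in> unif_circle \<rightarrow>\<^sub>M N \<longrightarrow>
            ((\<lambda>l. tgraph_img (tpsi A B C l (m, n))) \<in> unif_circle \<rightarrow>\<^sub>M N
             \<and> distr unif_circle N (\<lambda>l. tgraph_img (tpsi A B C l (m, n)))
               = distr unif_circle N (\<lambda>l. Tgraph A B C l)))"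
proof -
  have p1: "pi * pa \<noteq> 0" "pi * pb \<noteq> 0" using assms(1,3) by auto
  have BA: "B \<noteq> A" and CA: "C \<noteq> A" using assms(8) p1(1) by (auto simp: tri_angle_def Arg_zero)
  have CB: "C \<noteq> B" using assms(9) p1(2) by (auto simp: tri_angle_def Arg_zero)
  have nz: "tri_alpha A B C \<noteq> 0" "tri_beta A B C \<noteq> 0" "tri_gamma A B C \<noteq> 0"
    using BA CA CB by (auto simp: tri_alpha_def tri_beta_def tri_gamma_def)
  define c where "c = (tri_beta A B C / tri_gamma A B C) powi m * (tri_beta A B C / tri_alpha A B C) powi n"
  have c0: "c \<noteq> 0" unfolding c_def using nz by simp
  define th0 where "th0 = Arg c"
  define th where "th = (if 0 \<le> th0 then th0 else th0 + 2*pi)"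
  have th: "0 \<le> th" "th < 2*pi" using Arg_bounded[of c] unfolding th_def th0_def by auto
  have cth: "cis th = sgn c" unfolding th_def th0_def
    using cis_Arg[OF c0] by (auto simp: cis_mult[symmetric])
  have cdec: "c = cis th * complex_of_real (cmod c)" using c0
    by (simp add: cth sgn_eq)
  have G: "tgraph_img (tpsi A B C l (m, n)) = Tgraph A B C (l * cis th)" for l
  proof -
    have "tgraph_img (tpsi A B C l (m, n)) = Tgraph A B C (l * c)"
      using img_shift_main[OF nz, of l m n] unfolding c_def by (simp add: mult.assoc)
    also have "l * c = (l * cis th) * complex_of_real (cmod c)" by (subst cdec) (simp add: mult.assoc)
    also have "Tgraph A B C \<dots> = Tgraph A B C (l * cis th)" using c0 by (intro Tgraph_scale) simp
    finally show ?thesis .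
  qed
  show ?thesis
  proof (intro conjI allI impI)
    show "tgraph_img (tpsi A B C lam (m, n))
           = Tgraph A B C (lam * (tri_beta A B C / tri_gamma A B C) powi m
                               * (tri_beta A B C / tri_alpha A B C) powi n)"
      by (rule img_shift_main[OF nz])
    fix N :: "complex set measure"
    assume F: "(\<lambda>l. Tgraph A B C l) \<in> unif_circle \<rightarrow>\<^sub>M N"
    have eqf: "(\<lambda>l. tgraph_img (tpsi A B C l (m, n))) = (\<lambda>l. Tgraph A B C l) \<circ> (\<lambda>l. l * cis th)"
      using G by (simp add: fun_eq_iff)
    show "(\<lambda>l. tgraph_img (tpsi A B C l (m, n))) \<in> unif_circle \<rightarrow>\<^sub>M N"
      unfolding eqf by (rule measurable_comp[OF rot_meas F])
    show "distr unif_circle N (\<lambda>l. tgraph_img (tpsi A B C l (m, n)))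
               = distr unif_circle N (\<lambda>l. Tgraph A B C l)"
      unfolding eqf
      by (subst distr_distr[OF F rot_meas, symmetric]) (simp add: rot_inv[OF th])
  qed
qed


end
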